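(* Consider the two-valued atomic model under the Shapley scheme, with $n_b$ large players of stake $a$ and $n_s$ small players of stake $1$. If $n_s\ge (2h-1)^2+n_b\cdot(h+1)$, then the Price of Stability is at most $2$.
   Context: Atomic model: a finite set $N$ of players, player $i$ having stake $a_i>0$; threshold $h$. Two-valued: every player has stake either $1$ (small) or $a$ (large), where $h$ and $a$ are integers with $2\le a\le h-1$. Each player either opens her own pool or joins one; pools partition $N$. A pool $S$ has reward $\rho(S)=1$ if $\sum_{i\in S}a_i\ge h$ (winning pool) and $0$ otherwise. Shapley scheme: player $i$ in pool $S$ receives $\phi_i(S)=\sum_{T\subseteq S\setminus\{i\}}\frac{|T|!(|S|-|T|-1)!}{|S|!}(\rho(T\cup\{i\})-\rho(T))$. A partition of $N$ into winning pools is a Nash equilibrium if no player can strictly increase her payment by moving to another pool of the partition or by opening a new pool alone. $OPT(G)$ is the maximum number $t$ such that $N$ can be partitioned into $t$ pools each of stake at least $h$; $W(\Pi)$ is the number of winning pools of $\Pi$; the Price of Stability is $\min_\Pi OPT(G)/W(\Pi)$ over Nash equilibrium partitions $\Pi$. *)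

theory Defs
  imports Complex_Main "HOL-Library.Disjoint_Sets"
begin

definition pool_stake :: "('a \<Rightarrow> nat) \<Rightarrow> 'a set \<Rightarrow> nat" where
  "pool_stake stake S = (\<Sum>i\<in>S. stake i)"

definition winning :: "('a \<Rightarrow> nat) \<Rightarrow> nat \<Rightarrow> 'a set \<Rightarrow> bool" where
  "winning stake h S \<longleftrightarrow> pool_stake stake S \<ge> h"

definition rho :: "('a \<Rightarrow> nat) \<Rightarrow> nat \<Rightarrow> 'a set \<Rightarrow> real" where
  "rho stake h S = (if winning stake h S then 1 else 0)"

definition shapley :: "('a \<Rightarrow> nat) \<Rightarrow> nat \<Rightarrow> 'a set \<Rightarrow> 'a \<Rightarrow> real" where
  "shapley stake h S i =
     (\<Sum>T\<in>Pow (S - {i}).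
        (fact (card T) * fact (card S - card T - 1) / fact (card S))
        * (rho stake h (insert i T) - rho stake h T))"

definition nash_eq :: "'a set \<Rightarrow> ('a \<Rightarrow> nat) \<Rightarrow> nat \<Rightarrow> 'a set set \<Rightarrow> bool" where
  "nash_eq N stake h P \<longleftrightarrow>
     partition_on N P \<and> (\<forall>S\<in>P. winning stake h S) \<and>
     (\<forall>S\<in>P. \<forall>i\<in>S.
        (\<forall>S'\<in>P. S' \<noteq> S \<longrightarrow> shapley stake h (insert i S') i \<le> shapley stake h S i) \<and>
        shapley stake h {i} i \<le> shapley stake h S i)"

definition OPT :: "'a set \<Rightarrow> ('a \<Rightarrow> nat) \<Rightarrow> nat \<Rightarrow> nat" where
  "OPT N stake h = Max {card P | P. partition_on N P \<and> (\<forall>S\<in>P. winning stake h S)}"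

definition num_winning :: "('a \<Rightarrow> nat) \<Rightarrow> nat \<Rightarrow> 'a set set \<Rightarrow> nat" where
  "num_winning stake h P = card {S\<in>P. winning stake h S}"

end

theory Submission
  imports Defs
begin

lemma sum_Pow_card:
  fixes f :: "nat \<Rightarrow> real"
  assumes "finite X"
  shows "(\<Sum>T\<in>Pow X. f (card T)) = (\<Sum>l=0..card X. real (card X choose l) * f l)"
proof -
  have "(\<Sum>T\<in>Pow X. f (card T)) = (\<Sum>l\<in>{0..card X}. \<Sum>T\<in>{T. T \<in> Pow X \<and> card T = l}. f (card T))"
    by (rule sum.group[symmetric]) (auto simp: assms card_mono)
  also have "\<dots> = (\<Sum>l=0..card X. real (card X choose l) * f l)"
  proof (rule sum.cong[OF refl])
    fix l assume "l \<in> {0..card X}"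
    have "(\<Sum>T\<in>{T. T \<in> Pow X \<and> card T = l}. f (card T)) = (\<Sum>T\<in>{T. T \<subseteq> X \<and> card T = l}. f l)"
      by (rule sum.cong) auto
    also have "\<dots> = real (card X choose l) * f l"
      using n_subsets[OF assms, of l] by simp
    finally show "(\<Sum>T\<in>{T. T \<in> Pow X \<and> card T = l}. f (card T)) = real (card X choose l) * f l" .
  qed
  finally show ?thesis .
qed

definition V0 :: "nat \<Rightarrow> nat \<Rightarrow> nat \<Rightarrow> real" where
  "V0 h b x = real (card {l\<in>{0..b}. l < h \<and> h \<le> l + x}) / real (b+1)"

definition V1 :: "nat \<Rightarrow> nat \<Rightarrow> nat \<Rightarrow> nat \<Rightarrow> real" where
  "V1 h a b x = (\<Sum>l=0..b. (if l < h \<and> h \<le> l + x then real (b+1-l) else 0)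
       + (if a + l < h \<and> h \<le> a + l + x then real (l+1) else 0)) / (real (b+1) * real (b+2))"

lemma rho_diff:
  assumes "finite T" "i \<notin> T"
  shows "rho stake h (insert i T) - rho stake h T =
    (if pool_stake stake T < h \<and> h \<le> pool_stake stake T + stake i then 1 else 0)"
  using assms by (auto simp: rho_def winning_def pool_stake_def)

lemma pool_stake_ones:
  assumes "\<forall>j\<in>T. stake j = 1"
  shows "pool_stake stake T = card T"
  using assms by (simp add: pool_stake_def)

lemma fact_binom_real:
  assumes "l \<le> b"
  shows "real (b choose l) * fact l * fact (b - l) = fact b"
proof -
  have "fact l * fact (b - l) * (b choose l) = (fact b :: nat)" by (rule binomial_fact_lemma[OF assms])
  hence "real (fact l * fact (b - l) * (b choose l)) = real (fact b)" by simp
  thus ?thesis by (simp add: of_nat_fact algebra_simps)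
qed

lemma shapley_V0:
  assumes fin: "finite S" and iS: "i \<in> S" and ones: "\<forall>j\<in>S-{i}. stake j = 1"
    and cS: "card S = b + 1"
  shows "shapley stake h S i = V0 h b (stake i)"
proof -
  let ?X = "S - {i}"
  have fX: "finite ?X" using fin by simp
  have cX: "card ?X = b" using cS iS fin by simp
  define g where "g l = (fact l * fact (b - l) / fact (b+1)) *
      (if l < h \<and> h \<le> l + stake i then 1 else 0 :: real)" for l
  have "shapley stake h S i = (\<Sum>T\<in>Pow ?X. g (card T))"
    unfolding shapley_def
  proof (rule sum.cong[OF refl])
    fix T assume T: "T \<in> Pow ?X"
    hence fT: "finite T" using fX finite_subset by auto
    have iT: "i \<notin> T" using T by auto
    have ps: "pool_stake stake T = card T" using T ones by (intro pool_stake_ones) auto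
    have "card S - card T - 1 = b - card T" using cS by simp
    then show "fact (card T) * fact (card S - card T - 1) / fact (card S) *
        (rho stake h (insert i T) - rho stake h T) = g (card T)"
      unfolding g_def using rho_diff[OF fT iT, of stake h] ps cS by simp
  qed
  also have "\<dots> = (\<Sum>l=0..b. real (b choose l) * g l)"
    using sum_Pow_card[OF fX, of g] cX by simp
  also have "\<dots> = (\<Sum>l=0..b. (if l < h \<and> h \<le> l + stake i then 1 / real (b+1) else 0))"
  proof (rule sum.cong[OF refl])
    fix l assume "l \<in> {0..b}"
    hence lb: "l \<le> b" by simp
    have "real (b choose l) * (fact l * fact (b - l) / fact (b+1)) = (fact b / fact (b+1) :: real)"
      using fact_binom_real[OF lb] by (simp add: field_simps)
    also have "\<dots> = 1 / real (b+1)"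
      by (simp add: fact_Suc field_simps del: of_nat_Suc)
    finally have e: "real (b choose l) * (fact l * fact (b - l) / fact (b+1)) = 1 / real (b+1)" .
    show "real (b choose l) * g l = (if l < h \<and> h \<le> l + stake i then 1 / real (b+1) else 0)"
      unfolding g_def using e by (simp add: mult.assoc[symmetric])
  qed
  also have "\<dots> = V0 h b (stake i)"
    unfolding V0_def by (simp add: sum.If_cases divide_inverse Int_def conj_commute)
  finally show ?thesis .
qed

lemma shapley_V1:
  assumes fin: "finite S" and iS: "i \<in> S" and LS: "L \<in> S" and Li: "L \<noteq> i"
    and sL: "stake L = a"
    and ones: "\<forall>j\<in>S-{i,L}. stake j = 1"
    and cS: "card S = b + 2"
  shows "shapley stake h S i = V1 h a b (stake i)"
proof -
  let ?B = "S - {i, L}"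
  have fB: "finite ?B" using fin by simp
  have cB: "card ?B = b" using cS iS LS Li fin by (simp add: card_Diff_subset)
  have X: "S - {i} = insert L ?B" using LS Li by auto
  have LB: "L \<notin> ?B" by simp
  define coef where "coef T = fact (card T) * fact (card S - card T - 1) / fact (card S) *
        (rho stake h (insert i T) - rho stake h T)" for T
  define g1 where "g1 l = (fact l * fact (b + 1 - l) / fact (b+2)) *
      (if l < h \<and> h \<le> l + stake i then 1 else 0 :: real)" for l
  define g2 where "g2 l = (fact (l+1) * fact (b - l) / fact (b+2)) *
      (if a + l < h \<and> h \<le> a + l + stake i then 1 else 0 :: real)" for l
  have "shapley stake h S i = (\<Sum>T\<in>Pow ?B \<union> insert L ` Pow ?B. coef T)"
    unfolding shapley_def coef_def X Pow_insert ..
  also have "\<dots> = (\<Sum>T\<in>Pow ?B. coef T) + (\<Sum>T\<in>insert L ` Pow ?B. coef T)"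
    by (rule sum.union_disjoint) (use fB in auto)
  also have "(\<Sum>T\<in>insert L ` Pow ?B. coef T) = (\<Sum>T\<in>Pow ?B. coef (insert L T))"
  proof (rule sum.reindex_cong[of "insert L"])
    show "inj_on (insert L) (Pow ?B)"
      by (rule inj_onI) (metis Diff_insert_absorb PowD LB subset_iff)
  qed auto
  also have "(\<Sum>T\<in>Pow ?B. coef T) = (\<Sum>T\<in>Pow ?B. g1 (card T))"
  proof (rule sum.cong[OF refl])
    fix T assume T: "T \<in> Pow ?B"
    hence fT: "finite T" using fB finite_subset by auto
    have iT: "i \<notin> T" using T by auto
    have ps: "pool_stake stake T = card T" using T ones by (intro pool_stake_ones) auto
    have "card S - card T - 1 = b + 1 - card T" using cS by simp
    then show "coef T = g1 (card T)"
      unfolding g1_def coef_def using rho_diff[OF fT iT, of stake h] ps cS by simp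
  qed
  also have "(\<Sum>T\<in>Pow ?B. coef (insert L T)) = (\<Sum>T\<in>Pow ?B. g2 (card T))"
  proof (rule sum.cong[OF refl])
    fix T assume T: "T \<in> Pow ?B"
    hence fT: "finite T" using fB finite_subset by auto
    have LT: "L \<notin> T" using T by auto
    have fT': "finite (insert L T)" using fT by simp
    have iT: "i \<notin> insert L T" using T Li by auto
    have ps0: "pool_stake stake T = card T" using T ones by (intro pool_stake_ones) auto
    have ps: "pool_stake stake (insert L T) = a + card T"
      using ps0 fT LT sL by (simp add: pool_stake_def)
    have cT: "card (insert L T) = card T + 1" using fT LT by simp
    have "card S - card (insert L T) - 1 = b - card T" using cS cT by simp
    then show "coef (insert L T) = g2 (card T)"
      unfolding g2_def coef_def using rho_diff[OF fT' iT, of stake h] ps cS cT by simp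
  qed
  also have "(\<Sum>T\<in>Pow ?B. g1 (card T)) = (\<Sum>l=0..b. real (b choose l) * g1 l)"
    using sum_Pow_card[OF fB, of g1] cB by simp
  also have "(\<Sum>T\<in>Pow ?B. g2 (card T)) = (\<Sum>l=0..b. real (b choose l) * g2 l)"
    using sum_Pow_card[OF fB, of g2] cB by simp
  also have "(\<Sum>l=0..b. real (b choose l) * g1 l) + (\<Sum>l=0..b. real (b choose l) * g2 l)
      = (\<Sum>l=0..b. real (b choose l) * g1 l + real (b choose l) * g2 l)"
    by (simp add: sum.distrib)
  also have "\<dots> = (\<Sum>l=0..b. ((if l < h \<and> h \<le> l + stake i then real (b+1-l) else 0)
       + (if a + l < h \<and> h \<le> a + l + stake i then real (l+1) else 0)) / (real (b+1) * real (b+2)))"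
  proof (rule sum.cong[OF refl])
    fix l assume "l \<in> {0..b}"
    hence lb: "l \<le> b" by simp
    have fb0: "(fact b :: real) \<noteq> 0" by simp
    have fb2: "(fact (b+2) :: real) = real (b+2) * real (b+1) * fact b"
      by (simp add: fact_Suc field_simps del: of_nat_Suc)
    have f1: "(fact (b + 1 - l) :: real) = real (b + 1 - l) * fact (b - l)"
      using lb by (metis Suc_diff_le Suc_eq_plus1 fact_Suc of_nat_fact of_nat_mult)
    have f2: "(fact (l+1) :: real) = real (l+1) * fact l"
      by (simp add: fact_Suc del: of_nat_Suc)
    have e1: "real (b choose l) * (fact l * fact (b + 1 - l) / fact (b+2)) = real (b+1-l) / (real (b+1) * real (b+2))"
    proof -
      have "real (b choose l) * (fact l * fact (b + 1 - l) / fact (b+2)) =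
          (real (b choose l) * fact l * fact (b - l)) * real (b+1-l) / (real (b+2) * real (b+1) * fact b)"
        unfolding fb2 f1 by (simp add: algebra_simps)
      also have "\<dots> = fact b * real (b+1-l) / (fact b * (real (b+1) * real (b+2)))"
        using fact_binom_real[OF lb] by (simp add: mult_ac)
      also have "\<dots> = real (b+1-l) / (real (b+1) * real (b+2))"
        using fb0 by (rule nonzero_mult_divide_mult_cancel_left)
      finally show ?thesis .
    qed
    have e2: "real (b choose l) * (fact (l+1) * fact (b - l) / fact (b+2)) = real (l+1) / (real (b+1) * real (b+2))"
    proof -
      have "real (b choose l) * (fact (l+1) * fact (b - l) / fact (b+2)) =
          (real (b choose l) * fact l * fact (b - l)) * real (l+1) / (real (b+2) * real (b+1) * fact b)"
        unfolding fb2 f2 by (simp add: algebra_simps)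
      also have "\<dots> = fact b * real (l+1) / (fact b * (real (b+1) * real (b+2)))"
        using fact_binom_real[OF lb] by (simp add: mult_ac)
      also have "\<dots> = real (l+1) / (real (b+1) * real (b+2))"
        using fb0 by (rule nonzero_mult_divide_mult_cancel_left)
      finally show ?thesis .
    qed
    show "real (b choose l) * g1 l + real (b choose l) * g2 l = ((if l < h \<and> h \<le> l + stake i then real (b+1-l) else 0)
       + (if a + l < h \<and> h \<le> a + l + stake i then real (l+1) else 0)) / (real (b+1) * real (b+2))"
      unfolding g1_def g2_def using e1 e2 by (simp add: mult.assoc[symmetric] add_divide_distrib)
  qed
  also have "\<dots> = V1 h a b (stake i)"
    unfolding V1_def by (simp add: sum_divide_distrib)
  finally show ?thesis .
qed

lemma sum_up2: "2 * (\<Sum>l\<in>{p..<p+k}. real (l+1)) = real k * (2 * real p + real k + 1)"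
  by (induction k) (auto simp: algebra_simps)

lemma sum_up: "2 * (\<Sum>j<k. real (j+1)) = real k * (real k + 1)"
  using sum_up2[of 0 k] by (simp add: atLeast0LessThan)

lemma sum_down: "(\<Sum>l\<in>{d..<d+k}. real (d + k - l)) = (\<Sum>j<k. real (j+1))"
proof (induction k arbitrary: d)
  case 0 then show ?case by simp
next
  case (Suc k)
  have e: "{d..<d + Suc k} = insert d {Suc d..<Suc d + k}" by auto
  have "(\<Sum>l\<in>{d..<d + Suc k}. real (d + Suc k - l)) = real (Suc k) + (\<Sum>l\<in>{Suc d..<Suc d + k}. real (Suc d + k - l))"
    unfolding e by simp
  also have "\<dots> = real (Suc k) + (\<Sum>j<k. real (j+1))" using Suc.IH[of "Suc d"] by simp
  also have "\<dots> = (\<Sum>j<Suc k. real (j+1))" by simp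
  finally show ?case .
qed

context
  fixes h a d :: nat
  assumes hd: "h = a + d" and d1: "1 \<le> d" and a2: "2 \<le> a"
begin

lemma EV0_small: assumes "h - 1 \<le> b" shows "V0 h b 1 = 1 / real (b+1)"
proof -
  have "{l\<in>{0..b}. l < h \<and> h \<le> l + 1} = {h-1}" using assms hd d1 a2 by auto
  thus ?thesis unfolding V0_def by simp
qed

lemma EV0_alone: assumes "x < h" shows "V0 h 0 x = 0"
proof -
  have "{l\<in>{0..0::nat}. l < h \<and> h \<le> l + x} = {}" using assms by auto
  thus ?thesis unfolding V0_def by simp
qed

lemma EV0_large_pure: assumes "h - 1 \<le> b" shows "V0 h b a = real a / real (b+1)"
proof -
  have "{l\<in>{0..b}. l < h \<and> h \<le> l + a} = {d..<d+a}" using assms hd d1 a2 by auto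
  thus ?thesis unfolding V0_def by simp
qed

lemma EV0_large_L: assumes "d \<le> m" "m \<le> h - 1" shows "V0 h m a = real (m + 1 - d) / real (m+1)"
proof -
  have "{l\<in>{0..m}. l < h \<and> h \<le> l + a} = {d..<m+1}" using assms hd d1 a2 by auto
  thus ?thesis unfolding V0_def by simp
qed

lemma EV1_small_L: assumes "d \<le> m" "m \<le> h - 1"
  shows "V1 h a (m-1) 1 = real d / (real m * real (m+1))"
proof -
  have m1: "1 \<le> m" using assms d1 by simp
  have "(\<Sum>l=0..m-1. (if l < h \<and> h \<le> l + 1 then real (m-1+1-l) else 0)
       + (if a + l < h \<and> h \<le> a + l + 1 then real (l+1) else 0))
      = (\<Sum>l=0..m-1. (if l = d - 1 then real d else 0))"
  proof (rule sum.cong[OF refl])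
    fix l assume "l \<in> {0..m-1}"
    thus "(if l < h \<and> h \<le> l + 1 then real (m-1+1-l) else 0)
       + (if a + l < h \<and> h \<le> a + l + 1 then real (l+1) else 0) = (if l = d - 1 then real d else 0)"
      using assms hd d1 a2 by auto
  qed
  also have "\<dots> = real d" using assms d1 by (simp add: sum.delta)
  finally show ?thesis unfolding V1_def using m1 by (simp add: of_nat_diff)
qed

lemma EV1_small_join: assumes "d \<le> m" "m \<le> h - 1"
  shows "V1 h a m 1 = (real d + (if m = h - 1 then 1 else 0)) / (real (m+1) * real (m+2))"
proof -
  have "(\<Sum>l=0..m. (if l < h \<and> h \<le> l + 1 then real (m+1-l) else 0)
       + (if a + l < h \<and> h \<le> a + l + 1 then real (l+1) else 0))
      = (\<Sum>l=0..m. (if l = h - 1 then 1 else 0)) + (\<Sum>l=0..m. (if l = d - 1 then real d else 0))"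
    unfolding sum.distrib[symmetric]
  proof (rule sum.cong[OF refl])
    fix l assume "l \<in> {0..m}"
    thus "(if l < h \<and> h \<le> l + 1 then real (m+1-l) else 0)
       + (if a + l < h \<and> h \<le> a + l + 1 then real (l+1) else 0) =
       (if l = h - 1 then 1 else 0) + (if l = d - 1 then real d else 0)"
      using assms hd d1 a2 by auto
  qed
  also have "\<dots> = (if m = h - 1 then 1 else 0) + real d" using assms d1 a2 hd by (simp add: sum.delta)
  finally show ?thesis unfolding V1_def by simp
qed

lemma EV1_large_join: assumes "d \<le> m" "m \<le> h - 1"
  and D: "min a d * (2 * d - min a d + 1) \<le> (m + 1 - d) * ((m + 1 - d) + 2 * d + 1)"
  shows "V1 h a m a \<le> real (m + 1 - d) / real (m+1)"
proof -
  define u where "u = m + 1 - d"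
  define c where "c = min a d"
  have cd: "c \<le> d" "c \<le> a" unfolding c_def by auto
  have s1: "(\<Sum>l=0..m. (if l < h \<and> h \<le> l + a then real (m+1-l) else 0)) = (\<Sum>l\<in>{d..<d+u}. real (d + u - l))"
  proof -
    have "(\<Sum>l=0..m. (if l < h \<and> h \<le> l + a then real (m+1-l) else 0)) = (\<Sum>l\<in>{l\<in>{0..m}. l < h \<and> h \<le> l + a}. real (m+1-l))"
      by (rule sum.inter_filter[symmetric]) simp
    also have "{l\<in>{0..m}. l < h \<and> h \<le> l + a} = {d..<d+u}" using assms hd d1 a2 unfolding u_def by auto
    finally show ?thesis using assms unfolding u_def by simp
  qed
  have s2: "(\<Sum>l=0..m. (if a + l < h \<and> h \<le> a + l + a then real (l+1) else 0)) = (\<Sum>l\<in>{d-c..<(d-c)+c}. real (l+1))"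
  proof -
    have "(\<Sum>l=0..m. (if a + l < h \<and> h \<le> a + l + a then real (l+1) else 0)) = (\<Sum>l\<in>{l\<in>{0..m}. a + l < h \<and> h \<le> a + l + a}. real (l+1))"
      by (rule sum.inter_filter[symmetric]) simp
    also have "{l\<in>{0..m}. a + l < h \<and> h \<le> a + l + a} = {d-c..<(d-c)+c}" using assms hd d1 a2 unfolding c_def by auto
    finally show ?thesis .
  qed
  have N: "2 * (\<Sum>l=0..m. (if l < h \<and> h \<le> l + a then real (m+1-l) else 0)
       + (if a + l < h \<and> h \<le> a + l + a then real (l+1) else 0)) = real u * (real u + 1) + real c * (2 * real (d - c) + real c + 1)"
    unfolding sum.distrib s1 s2 sum_down distrib_left sum_up sum_up2 ..
  have D': "real c * (2 * real (d - c) + real c + 1) \<le> real u * (real u + 2 * real d + 1)"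
  proof -
    have r: "real (c * (2 * d - c + 1)) \<le> real (u * (u + 2 * d + 1))" using D unfolding u_def c_def by linarith
    have e1: "real (2 * d - c) = 2 * real (d - c) + real c" using cd by (simp add: of_nat_diff)
    have "real (c * (2 * d - c + 1)) = real c * (real (2 * d - c) + 1)" by (simp only: of_nat_mult of_nat_add of_nat_1)
    also have "\<dots> = real c * (2 * real (d - c) + real c + 1)" using e1 by simp
    finally show ?thesis using r by (simp add: algebra_simps)
  qed
  have m1: "real (m+1) = real u + real d" "real (m+2) = real u + real d + 1" using assms unfolding u_def by auto
  have pos: "real (m+1) > 0" "real (m+2) > 0" by auto
  have "V1 h a m a = (real u * (real u + 1) + real c * (2 * real (d - c) + real c + 1)) / (2 * (real (m+1) * real (m+2)))"
  proof -
    define Ns where "Ns = (\<Sum>l=0..m. (if l < h \<and> h \<le> l + a then real (m+1-l) else 0)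
       + (if a + l < h \<and> h \<le> a + l + a then real (l+1) else 0))"
    have e: "2 * Ns = real u * (real u + 1) + real c * (2 * real (d - c) + real c + 1)"
      using N unfolding Ns_def .
    have "V1 h a m a = Ns / (real (m+1) * real (m+2))" unfolding V1_def Ns_def ..
    also have "\<dots> = (2 * Ns) / (2 * (real (m+1) * real (m+2)))" by simp
    finally show ?thesis unfolding e .

  qed
  also have "\<dots> \<le> real u / real (m+1)"
  proof -
    have X: "real u * (real u + 1) + real c * (2 * real (d - c) + real c + 1) \<le> 2 * real u * real (m+2)"
      using D' unfolding m1 by (simp add: algebra_simps)
    have "(real u * (real u + 1) + real c * (2 * real (d - c) + real c + 1)) / (2 * (real (m+1) * real (m+2)))
       \<le> (2 * real u * real (m+2)) / (2 * (real (m+1) * real (m+2)))"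
      by (rule divide_right_mono[OF X]) simp
    also have "\<dots> = (real u * (2 * real (m+2))) / (real (m+1) * (2 * real (m+2)))" by (simp only: mult.assoc mult.commute mult.left_commute)
    also have "\<dots> = real u / real (m+1)"
      by (rule nonzero_mult_divide_mult_cancel_right) simp
    finally show ?thesis .
  qed
  finally show ?thesis unfolding u_def .
qed

end

definition Lpool :: "('a \<Rightarrow> nat) \<Rightarrow> nat \<Rightarrow> nat \<Rightarrow> 'a set \<Rightarrow> bool" where
  "Lpool stake a m S \<longleftrightarrow> (\<exists>l\<in>S. stake l = a \<and> (\<forall>j\<in>S-{l}. stake j = 1) \<and> card S = m + 1)"

definition Ppool :: "('a \<Rightarrow> nat) \<Rightarrow> nat \<Rightarrow> 'a set \<Rightarrow> bool" where
  "Ppool stake t S \<longleftrightarrow> (\<forall>j\<in>S. stake j = 1) \<and> (card S + 1 = t \<or> card S = t)"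

lemma ineq_div:
  fixes x y z w :: nat
  assumes "x * w \<le> z * y" "0 < y" "0 < w"
  shows "real x / real y \<le> real z / real w"
proof -
  have "real x * real w \<le> real z * real y" using assms(1) by (metis of_nat_le_iff of_nat_mult)
  thus ?thesis using assms(2,3) by (simp add: field_simps)
qed

context
  fixes N :: "'a set" and stake :: "'a \<Rightarrow> nat" and h a d m t :: nat and P :: "'a set set"
  assumes hd: "h = a + d" and d1: "1 \<le> d" and a2: "2 \<le> a"
    and finN: "finite N"
    and stakes: "\<forall>i\<in>N. stake i = 1 \<or> stake i = a"
    and part: "partition_on N P"
    and types: "\<forall>S\<in>P. Lpool stake a m S \<or> Ppool stake t S"
    and mdm: "d \<le> m" and mh: "m \<le> h - 1"
    and th: "h + 1 \<le> t"
    and cA: "m * (m + 1) \<le> t * d"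
    and cB: "t * (d + (if m = h - 1 then 1 else 0)) \<le> (m + 1) * (m + 2)"
    and cC: "a * (m + 1) \<le> t * (m + 1 - d)"
    and cD: "min a d * (2 * d - min a d + 1) \<le> (m + 1 - d) * ((m + 1 - d) + 2 * d + 1)"
    and cE: "m * (if m = h - 1 then 1 else 0) \<le> 2 * d"
begin

lemma finS: "S \<in> P \<Longrightarrow> finite S"
  using part finN unfolding partition_on_def by (metis Union_upper finite_subset)

lemma subN: "S \<in> P \<Longrightarrow> S \<subseteq> N"
  using part unfolding partition_on_def by blast

lemma winning_pools: "S \<in> P \<Longrightarrow> winning stake h S"
proof -
  assume SP: "S \<in> P"
  have fS: "finite S" using finS[OF SP] .
  show ?thesis
  proof (cases "Lpool stake a m S")
    case True
    then obtain l where l: "l \<in> S" "stake l = a" "\<forall>j\<in>S-{l}. stake j = 1" "card S = m + 1"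
      unfolding Lpool_def by blast
    have "pool_stake stake S = stake l + pool_stake stake (S - {l})"
      unfolding pool_stake_def using fS l(1) by (simp add: sum.remove)
    also have "pool_stake stake (S - {l}) = card (S - {l})" using l(3) by (rule pool_stake_ones)
    also have "card (S - {l}) = m" using l fS by simp
    finally show ?thesis unfolding winning_def using l(2) mdm hd by simp
  next
    case False
    hence "Ppool stake t S" using types SP by blast
    hence "pool_stake stake S = card S" "card S + 1 = t \<or> card S = t"
      unfolding Ppool_def using pool_stake_ones by auto
    thus ?thesis unfolding winning_def using th by auto
  qed
qed

lemma val_alone:
  assumes "i \<in> N" shows "shapley stake h {i} i = 0"
proof -
  have "shapley stake h {i} i = V0 h 0 (stake i)" by (rule shapley_V0) auto
  also have "\<dots> = 0" using stakes assms hd d1 a2 by (intro EV0_alone[OF hd d1 a2]) auto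
  finally show ?thesis .
qed

lemma val_cur_L_large:
  assumes "S \<in> P" "l \<in> S" "stake l = a" "\<forall>j\<in>S-{l}. stake j = 1" "card S = m + 1"
  shows "shapley stake h S l = real (m + 1 - d) / real (m+1)"
proof -
  have "shapley stake h S l = V0 h m (stake l)" using assms finS by (intro shapley_V0) auto
  thus ?thesis using EV0_large_L[OF hd d1 a2 mdm mh] assms by simp
qed

lemma val_cur_L_small:
  assumes "S \<in> P" "l \<in> S" "stake l = a" "\<forall>j\<in>S-{l}. stake j = 1" "card S = m + 1" "i \<in> S" "i \<noteq> l"
  shows "shapley stake h S i = real d / (real m * real (m+1))"
proof -
  have m1: "1 \<le> m" using mdm d1 by simp
  have "shapley stake h S i = V1 h a (m-1) (stake i)"
    using assms finS m1 by (intro shapley_V1[where L = l]) auto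
  thus ?thesis using EV1_small_L[OF hd d1 a2 mdm mh] assms by simp
qed

lemma val_cur_P:
  assumes "S \<in> P" "\<forall>j\<in>S. stake j = 1" "i \<in> S"
  shows "shapley stake h S i = 1 / real (card S)"
proof -
  have fS: "finite S" using finS assms(1) .
  have "card S > 0" using assms(3) fS by (auto simp: card_gt_0_iff)
  hence c: "card S = (card S - 1) + 1" by simp
  have "shapley stake h S i = V0 h (card S - 1) (stake i)"
    using assms fS c by (intro shapley_V0) auto
  also have "\<dots> = V0 h (card S - 1) 1" using assms by simp
  also have "\<dots> = 1 / real (card S - 1 + 1)"
  proof (rule EV0_small[OF hd d1 a2])
    have "\<not> Lpool stake a m S" using assms(2) a2 unfolding Lpool_def by force
    hence "Ppool stake t S" using types assms(1) by blast
    thus "h - 1 \<le> card S - 1" using th unfolding Ppool_def by auto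
  qed
  finally show ?thesis using c by simp
qed


lemma disj: "S \<in> P \<Longrightarrow> S' \<in> P \<Longrightarrow> S' \<noteq> S \<Longrightarrow> i \<in> S \<Longrightarrow> i \<notin> S'"
  using part unfolding partition_on_def pairwise_def disjnt_def by blast

lemma val_dev_L:
  assumes "S' \<in> P" "l \<in> S'" "stake l = a" "\<forall>j\<in>S'-{l}. stake j = 1" "card S' = m + 1" "i \<notin> S'"
  shows "shapley stake h (insert i S') i = V1 h a m (stake i)"
proof -
  have fS: "finite S'" using finS assms(1) .
  show ?thesis using assms fS by (intro shapley_V1[where L = l]) auto
qed

lemma val_dev_P:
  assumes "S' \<in> P" "\<forall>j\<in>S'. stake j = 1" "i \<notin> S'"
  shows "shapley stake h (insert i S') i = V0 h (card S') (stake i)"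
proof -
  have fS: "finite S'" using finS assms(1) .
  show ?thesis using assms fS by (intro shapley_V0) auto
qed

lemma P_card: assumes "S \<in> P" "\<forall>j\<in>S. stake j = 1" shows "card S + 1 = t \<or> card S = t"
proof -
  have "\<not> Lpool stake a m S" using assms(2) a2 unfolding Lpool_def by force
  hence "Ppool stake t S" using types assms(1) by blast
  thus ?thesis unfolding Ppool_def by auto
qed

lemma ev_small_join: "V1 h a m 1 = real (d + (if m = h - 1 then 1 else 0)) / real ((m+1)*(m+2))"
  using EV1_small_join[OF hd d1 a2 mdm mh] by (simp add: algebra_simps)

lemma nash_main:
  assumes SP: "S \<in> P" and iS: "i \<in> S"
  shows "(\<forall>S'\<in>P. S' \<noteq> S \<longrightarrow> shapley stake h (insert i S') i \<le> shapley stake h S i) \<and>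
        shapley stake h {i} i \<le> shapley stake h S i"
proof -
  have iN: "i \<in> N" using subN[OF SP] iS by blast
  define cur where "cur = shapley stake h S i"
  have m1: "1 \<le> m" using mdm d1 by simp
  have dev: "shapley stake h (insert i S') i \<le> cur" if S'P: "S' \<in> P" and ne: "S' \<noteq> S" for S'
  proof -
    have iS': "i \<notin> S'" using disj[OF SP S'P ne iS] .
    show ?thesis
    proof (cases "Lpool stake a m S'")
      case L': True
      then obtain l' where l': "l' \<in> S'" "stake l' = a" "\<forall>j\<in>S'-{l'}. stake j = 1" "card S' = m + 1"
        unfolding Lpool_def by blast
      have dv: "shapley stake h (insert i S') i = V1 h a m (stake i)" by (rule val_dev_L[OF S'P l' iS'])
      show ?thesis
      proof (cases "Lpool stake a m S")
        case True
        then obtain l where l: "l \<in> S" "stake l = a" "\<forall>j\<in>S-{l}. stake j = 1" "card S = m + 1"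
          unfolding Lpool_def by blast
        show ?thesis
        proof (cases "i = l")
          case True
          have "cur = real (m + 1 - d) / real (m+1)" unfolding cur_def True by (rule val_cur_L_large[OF SP l])
          thus ?thesis using dv EV1_large_join[OF hd d1 a2 mdm mh cD] l(2) True by simp
        next
          case False
          have si: "stake i = 1" using l(3) iS False by blast
          have "cur = real d / (real m * real (m+1))" unfolding cur_def by (rule val_cur_L_small[OF SP l iS False])
          hence c: "cur = real d / real (m * (m+1))" by (simp add: algebra_simps)
          have "real (d + (if m = h - 1 then 1 else 0)) / real ((m+1)*(m+2)) \<le> real d / real (m * (m+1))"
          proof (rule ineq_div)
            have key: "(d + e) * (m * (m + 1)) \<le> d * ((m + 1) * (m + 2))" if "m * e \<le> 2 * d" for e
            proof -
              have "m * (d + e) \<le> d * (m + 2)" using that by (simp add: algebra_simps)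
              hence "(m + 1) * (m * (d + e)) \<le> (m + 1) * (d * (m + 2))"
                by (rule mult_le_mono2)
              thus ?thesis by (simp only: mult.assoc mult.commute mult.left_commute)
            qed
            show "(d + (if m = h - 1 then 1 else 0)) * (m * (m + 1)) \<le> d * ((m + 1) * (m + 2))"
              by (rule key) (rule cE)
          qed (use m1 in auto)
          thus ?thesis using dv si ev_small_join c by simp
        qed
      next
        case False
        hence Pp: "Ppool stake t S" using types SP by blast
        hence ones: "\<forall>j\<in>S. stake j = 1" and cs: "card S + 1 = t \<or> card S = t" unfolding Ppool_def by auto
        have si: "stake i = 1" using ones iS by blast
        have c: "cur = 1 / real (card S)" unfolding cur_def by (rule val_cur_P[OF SP ones iS])
        have cS0: "0 < card S" using iS finS[OF SP] by (auto simp: card_gt_0_iff)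
        have "real (d + (if m = h - 1 then 1 else 0)) / real ((m+1)*(m+2)) \<le> real 1 / real (card S)"
        proof (rule ineq_div)
          have key: "(d + e) * card S \<le> 1 * ((m + 1) * (m + 2))" if "t * (d + e) \<le> (m + 1) * (m + 2)" for e
          proof -
            have "card S \<le> t" using cs by auto
            hence "card S * (d + e) \<le> t * (d + e)" by (rule mult_le_mono1)
            hence "card S * (d + e) \<le> (m + 1) * (m + 2)" using that by (rule le_trans)
            thus ?thesis by (simp add: mult.commute)
          qed
          show "(d + (if m = h - 1 then 1 else 0)) * card S \<le> 1 * ((m + 1) * (m + 2))"
            by (rule key) (rule cB)
        qed (use cS0 in auto)
        thus ?thesis using dv si ev_small_join c by simp
      qed
    next
      case False
      hence Pp': "Ppool stake t S'" using types S'P by blast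
      hence ones': "\<forall>j\<in>S'. stake j = 1" and cs': "card S' + 1 = t \<or> card S' = t" unfolding Ppool_def by auto
      have dv: "shapley stake h (insert i S') i = V0 h (card S') (stake i)" by (rule val_dev_P[OF S'P ones' iS'])
      have hS': "h - 1 \<le> card S'" using cs' th by auto
      have tS': "t \<le> card S' + 1" using cs' by auto
      show ?thesis
      proof (cases "Lpool stake a m S")
        case True
        then obtain l where l: "l \<in> S" "stake l = a" "\<forall>j\<in>S-{l}. stake j = 1" "card S = m + 1"
          unfolding Lpool_def by blast
        show ?thesis
        proof (cases "i = l")
          case True
          have c: "cur = real (m + 1 - d) / real (m+1)" unfolding cur_def True by (rule val_cur_L_large[OF SP l])
          have "real a / real (card S' + 1) \<le> real (m + 1 - d) / real (m+1)"
          proof (rule ineq_div)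
            have "t * (m + 1 - d) \<le> (card S' + 1) * (m + 1 - d)" using tS' by (rule mult_le_mono1)
            thus "a * (m + 1) \<le> (m + 1 - d) * (card S' + 1)" using cC by (simp add: mult_ac)
          qed auto
          thus ?thesis using dv c EV0_large_pure[OF hd d1 a2 hS'] l(2) True by simp
        next
          case False
          have si: "stake i = 1" using l(3) iS False by blast
          have "cur = real d / (real m * real (m+1))" unfolding cur_def by (rule val_cur_L_small[OF SP l iS False])
          hence c: "cur = real d / real (m * (m+1))" by (simp add: algebra_simps)
          have "real 1 / real (card S' + 1) \<le> real d / real (m * (m+1))"
          proof (rule ineq_div)
            have "t * d \<le> (card S' + 1) * d" using tS' by (rule mult_le_mono1)
            thus "1 * (m * (m + 1)) \<le> d * (card S' + 1)" using cA by (simp add: mult_ac)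
          qed (use m1 in auto)
          thus ?thesis using dv c EV0_small[OF hd d1 a2 hS'] si by simp
        qed
      next
        case False
        hence Pp: "Ppool stake t S" using types SP by blast
        hence ones: "\<forall>j\<in>S. stake j = 1" and cs: "card S + 1 = t \<or> card S = t" unfolding Ppool_def by auto
        have si: "stake i = 1" using ones iS by blast
        have c: "cur = 1 / real (card S)" unfolding cur_def by (rule val_cur_P[OF SP ones iS])
        have cS0: "0 < card S" using iS finS[OF SP] by (auto simp: card_gt_0_iff)
        have "real 1 / real (card S' + 1) \<le> real 1 / real (card S)"
          by (rule ineq_div) (use cs tS' cS0 in auto)
        thus ?thesis using dv c EV0_small[OF hd d1 a2 hS'] si by simp
      qed
    qed
  qed
  have cur0: "0 \<le> cur"
  proof (cases "Lpool stake a m S")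
    case True
    then obtain l where l: "l \<in> S" "stake l = a" "\<forall>j\<in>S-{l}. stake j = 1" "card S = m + 1"
      unfolding Lpool_def by blast
    show ?thesis
    proof (cases "i = l")
      case True thus ?thesis unfolding cur_def using val_cur_L_large[OF SP l] by simp
    next
      case False thus ?thesis unfolding cur_def using val_cur_L_small[OF SP l iS False] by simp
    qed
  next
    case False
    hence "\<forall>j\<in>S. stake j = 1" using types SP unfolding Ppool_def by blast
    thus ?thesis unfolding cur_def using val_cur_P[OF SP _ iS] by simp
  qed
  show ?thesis
    using dev cur0 val_alone[OF iN] unfolding cur_def by auto
qed

lemma nash: "nash_eq N stake h P"
  unfolding nash_eq_def using part winning_pools nash_main by blast

end

lemma split_fun:
  fixes f :: "nat \<Rightarrow> nat"
  assumes "finite X" "card X = (\<Sum>j<K. f j)"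
  shows "\<exists>G. (\<forall>j<K. G j \<subseteq> X \<and> card (G j) = f j) \<and> (\<forall>j<K. \<forall>k<K. j \<noteq> k \<longrightarrow> G j \<inter> G k = {})
           \<and> (\<Union>j<K. G j) = X"
  using assms
proof (induction K arbitrary: X)
  case 0
  then show ?case by simp
next
  case (Suc K)
  have "f K \<le> card X" using Suc.prems by simp
  then obtain A where A: "A \<subseteq> X" "card A = f K" "finite A" by (rule obtain_subset_with_card_n)
  have "card (X - A) = (\<Sum>j<K. f j)" using Suc.prems A by (simp add: card_Diff_subset)
  then obtain G where G: "\<forall>j<K. G j \<subseteq> X - A \<and> card (G j) = f j"
      "\<forall>j<K. \<forall>k<K. j \<noteq> k \<longrightarrow> G j \<inter> G k = {}" "(\<Union>j<K. G j) = X - A"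
    using Suc.IH[of "X - A"] Suc.prems by auto
  define G' where "G' = G(K := A)"
  have "\<forall>j<Suc K. G' j \<subseteq> X \<and> card (G' j) = f j"
    using G(1) A unfolding G'_def by (auto simp: less_Suc_eq)
  moreover have "\<forall>j<Suc K. \<forall>k<Suc K. j \<noteq> k \<longrightarrow> G' j \<inter> G' k = {}"
    using G(1,2) unfolding G'_def by (auto simp: less_Suc_eq)
  moreover have "(\<Union>j<Suc K. G' j) = X"
  proof -
    have "(\<Union>j<Suc K. G' j) = (\<Union>j<K. G j) \<union> A"
      unfolding G'_def lessThan_Suc by auto
    thus ?thesis using G(3) A by auto
  qed
  ultimately show ?case by blast
qed

lemma construct:
  fixes N :: "'a set" and stake :: "'a \<Rightarrow> nat" and a m t n_b n_s :: nat
  assumes finN: "finite N" and stakes: "\<forall>i\<in>N. stake i = 1 \<or> stake i = a" and a2: "2 \<le> a"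
    and cb: "card {i\<in>N. stake i = a} = n_b" and cs: "card {i\<in>N. stake i = 1} = n_s"
    and t2: "2 \<le> t" and big: "n_b * m + (t - 1)^2 \<le> n_s"
  shows "\<exists>P q. partition_on N P \<and> (\<forall>S\<in>P. Lpool stake a m S \<or> Ppool stake t S) \<and> card P = n_b + q
           \<and> n_s \<le> n_b * m + t * q \<and> 0 < q"
proof -
  define Lg where "Lg = {i\<in>N. stake i = a}"
  define Sm where "Sm = {i\<in>N. stake i = 1}"
  have fLg: "finite Lg" and fSm: "finite Sm" unfolding Lg_def Sm_def using finN by auto
  have NLS: "N = Lg \<union> Sm" unfolding Lg_def Sm_def using stakes by auto
  have LSd: "Lg \<inter> Sm = {}" unfolding Lg_def Sm_def using a2 by auto
  define s where "s = t - 1"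
  have s1: "1 \<le> s" and st: "s + 1 = t" unfolding s_def using t2 by auto
  define R where "R = n_s - n_b * m"
  have R: "n_s = n_b * m + R" "s * s \<le> R" unfolding R_def s_def using big by (auto simp: power2_eq_square)
  define q where "q = R div s"
  define r where "r = R mod s"
  have Rqr: "R = q * s + r" unfolding q_def r_def by simp
  have rs: "r < s" unfolding r_def using s1 by simp
  have qs: "s \<le> q" unfolding q_def using R(2) s1 by (simp add: less_eq_div_iff_mult_less_eq)
  have rq: "r \<le> q" using rs qs by simp
  define f where "f j = (if j < n_b then m else if j < n_b + r then t else s)" for j
  define K where "K = n_b + q"
  have sumf: "(\<Sum>j<K. f j) = n_s"
  proof -
    have "(\<Sum>j<K. f j) = (\<Sum>j\<in>{0..<n_b}. f j) + (\<Sum>j\<in>{n_b..<n_b + r}. f j) + (\<Sum>j\<in>{n_b + r..<K}. f j)"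
      unfolding K_def using rq
      by (simp add: sum.atLeastLessThan_concat atLeast0LessThan[symmetric])
    also have "(\<Sum>j\<in>{0..<n_b}. f j) = n_b * m" unfolding f_def by simp
    also have "(\<Sum>j\<in>{n_b..<n_b + r}. f j) = r * t" unfolding f_def by simp
    also have "(\<Sum>j\<in>{n_b + r..<K}. f j) = (q - r) * s" unfolding f_def K_def by simp
    finally have e: "(\<Sum>j<K. f j) = n_b * m + r * t + (q - r) * s" .
    have e1: "r * t = r * s + r" using st[symmetric] by (simp add: algebra_simps)
    have e2: "(q - r) * s + r * s = q * s" using rq by (metis add_mult_distrib le_add_diff_inverse2)
    show ?thesis unfolding e using R Rqr e1 e2 by linarith
  qed
  obtain G where G: "\<forall>j<K. G j \<subseteq> Sm \<and> card (G j) = f j" "\<forall>j<K. \<forall>k<K. j \<noteq> k \<longrightarrow> G j \<inter> G k = {}"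
      "(\<Union>j<K. G j) = Sm"
    using split_fun[OF fSm, where K=K and f=f] sumf cs unfolding Sm_def by auto
  obtain L where L: "bij_betw L {0..<n_b} Lg" using ex_bij_betw_nat_finite[OF fLg] cb unfolding Lg_def by auto
  have Lin: "j < n_b \<Longrightarrow> L j \<in> Lg" for j using L unfolding bij_betw_def by auto
  have Linj: "j < n_b \<Longrightarrow> k < n_b \<Longrightarrow> L j = L k \<Longrightarrow> j = k" for j k
    using L unfolding bij_betw_def inj_on_def by auto
  have Lsurj: "x \<in> Lg \<Longrightarrow> \<exists>j<n_b. x = L j" for x using L unfolding bij_betw_def by auto
  have LG: "j < n_b \<Longrightarrow> k < K \<Longrightarrow> L j \<notin> G k" for j k using Lin G(1) LSd by blast
  have finG: "j < K \<Longrightarrow> finite (G j)" for j using G(1) fSm finite_subset by blast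
  define pool where "pool j = (if j < n_b then insert (L j) (G j) else G j)" for j
  define P where "P = pool ` {..<K}"
  have ne: "j < K \<Longrightarrow> pool j \<noteq> {}" for j
  proof -
    assume jK: "j < K"
    show ?thesis
    proof (cases "j < n_b")
      case True thus ?thesis unfolding pool_def by simp
    next
      case False
      hence "card (G j) = t \<or> card (G j) = s" using G(1) jK unfolding f_def by auto
      thus ?thesis unfolding pool_def using False s1 t2 by auto
    qed
  qed
  have dis: "j < K \<Longrightarrow> k < K \<Longrightarrow> j \<noteq> k \<Longrightarrow> pool j \<inter> pool k = {}" for j k
    unfolding pool_def using G(2) LG Linj by (auto simp: K_def)
  have inj: "inj_on pool {..<K}"
  proof (rule inj_onI)
    fix j k assume "j \<in> {..<K}" "k \<in> {..<K}" "pool j = pool k"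
    thus "j = k" using dis ne by fastforce
  qed
  have part: "partition_on N P"
  proof (rule partition_onI)
    show "\<Union>P = N"
    proof
      show "\<Union>P \<subseteq> N" unfolding P_def pool_def NLS using G(1) Lin by (auto simp: K_def split: if_splits)
      show "N \<subseteq> \<Union>P"
      proof
        fix x assume "x \<in> N"
        hence "x \<in> Lg \<or> x \<in> Sm" using NLS by auto
        thus "x \<in> \<Union>P"
        proof
          assume "x \<in> Lg"
          then obtain j where "j < n_b" "x = L j" using Lsurj by blast
          thus ?thesis unfolding P_def pool_def K_def by force
        next
          assume "x \<in> Sm"
          then obtain j where j: "j < K" "x \<in> G j" using G(3) by blast
          hence "x \<in> pool j" unfolding pool_def by auto
          thus ?thesis unfolding P_def using j by blast
        qed
      qed
    qed
  next
    fix p q' assume "p \<in> P" "q' \<in> P" "p \<noteq> q'"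
    then obtain j k where "j < K" "k < K" "p = pool j" "q' = pool k" "j \<noteq> k" unfolding P_def by auto
    thus "disjnt p q'" using dis unfolding disjnt_def by blast
  next
    show "{} \<notin> P" unfolding P_def using ne by auto
  qed
  have types: "\<forall>S\<in>P. Lpool stake a m S \<or> Ppool stake t S"
  proof
    fix S assume "S \<in> P"
    then obtain j where j: "j < K" "S = pool j" unfolding P_def by auto
    show "Lpool stake a m S \<or> Ppool stake t S"
    proof (cases "j < n_b")
      case True
      have "Lpool stake a m S" unfolding Lpool_def
      proof (intro bexI[of _ "L j"] conjI)
        show "L j \<in> S" using j True unfolding pool_def by simp
        show "stake (L j) = a" using Lin[OF True] unfolding Lg_def by simp
        show "\<forall>i\<in>S - {L j}. stake i = 1" using j True G(1) unfolding pool_def Sm_def by auto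
        show "card S = m + 1" using j True G(1) finG[OF j(1)] LG[OF True j(1)] unfolding pool_def f_def by simp
      qed
      thus ?thesis by blast
    next
      case False
      have "Ppool stake t S" unfolding Ppool_def
      proof
        show "\<forall>i\<in>S. stake i = 1" using j False G(1) unfolding pool_def Sm_def by auto
        show "card S + 1 = t \<or> card S = t" using j False G(1) st unfolding pool_def f_def by auto
      qed
      thus ?thesis by blast
    qed
  qed
  have cP: "card P = n_b + q" unfolding P_def using card_image[OF inj] K_def by simp
  have qt: "t * q = q * s + q" using st[symmetric] by (simp add: algebra_simps)
  have "n_s \<le> n_b * m + t * q" using R Rqr rq unfolding qt by simp
  moreover have "0 < q" using qs s1 by simp
  ultimately show ?thesis using part types cP by blast
qed

lemma ex_m: "\<exists>m::nat. m * (m + 1) \<le> X \<and> X < (m + 1) * (m + 2)"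
proof -
  define n where "n = (LEAST n::nat. X < n * (n + 1))"
  have ex: "X < (X+1) * (X + 1 + 1)" by simp
  have n: "X < n * (n + 1)" unfolding n_def by (rule LeastI[of _ "X+1"]) (use ex in simp)
  have n0: "n \<noteq> 0" using n by (cases n) auto
  have lt: "n - 1 < n" using n0 by simp
  have "\<not> X < (n - 1) * (n - 1 + 1)"
    by (rule not_less_Least[of "n - 1" "\<lambda>n. X < n * (n + 1)", folded n_def, OF lt])
  thus ?thesis using n n0 by (intro exI[of _ "n - 1"]) auto
qed

lemma case2:
  fixes a d t m :: nat
  assumes a2: "2 \<le> a" and d1: "1 \<le> d" and big: "a + d < a * a"
    and ta: "2 * a + d \<le> t" and t2: "t \<le> 2 * (a + d)" and tl: "t * d < (a + d - 1) * (a + d)"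
    and m1: "m * (m + 1) \<le> t * d" and m2: "t * d < (m + 1) * (m + 2)"
  shows "d \<le> m \<and> m + 2 \<le> a + d \<and> a * (m + 1) \<le> t * (m + 1 - d)
     \<and> min a d * (2 * d - min a d + 1) \<le> (m + 1 - d) * ((m + 1 - d) + 2 * d + 1)"
proof -
  have mh: "m + 2 \<le> a + d"
  proof (rule ccontr)
    assume "\<not> m + 2 \<le> a + d"
    hence "a + d - 1 \<le> m" "a + d \<le> m + 1" by auto
    hence "(a + d - 1) * (a + d) \<le> m * (m + 1)" by (rule mult_le_mono)
    thus False using m1 tl by linarith
  qed
  have dm: "d \<le> m"
  proof (rule ccontr)
    assume "\<not> d \<le> m"
    hence "m + 1 \<le> d" "m + 2 \<le> d + 1" by auto
    hence "(m + 1) * (m + 2) \<le> d * (d + 1)" by (rule mult_le_mono)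
    also have "d * (d + 1) \<le> d * t" using ta a2 by (intro mult_le_mono2) linarith
    finally show False using m2 by (simp add: mult.commute)
  qed
  define u where "u = m + 1 - d"
  have mu: "m + 1 = u + d" unfolding u_def using dm by simp
  have m2': "m + 2 = u + d + 1" using mu by simp
  have "(m + 1) * (m + 2) = (u + d) * (u + d + 1)" by (simp only: mu m2')
  hence F1: "t * d + 1 \<le> (u + d) * (u + d + 1)" using m2 by linarith
  have C: "a * (m + 1) \<le> t * (m + 1 - d)"
  proof -
    have "u + d + 1 + a \<le> t" using mh mu ta by linarith
    hence F2: "(u + d + 1 + a) * (u + d) \<le> t * (u + d)" by (rule mult_le_mono1)
    have "a * (u + d) \<le> t * u" using F1 F2 by (simp add: algebra_simps)
    thus ?thesis unfolding mu u_def[symmetric] by simp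
  qed
  have D: "min a d * (2 * d - min a d + 1) \<le> u * (u + 2 * d + 1)"
  proof (cases "a \<le> d")
    case True
    have mn: "min a d = a" using True by simp
    have F3: "(2 * a + d) * d \<le> t * d" using ta by (rule mult_le_mono1)
    have e: "a * (2 * d - a + 1) + a * a = a * (2 * d + 1)"
    proof -
      have "(2 * d - a + 1) + a = 2 * d + 1" using True by simp
      hence "a * ((2 * d - a + 1) + a) = a * (2 * d + 1)" by simp
      thus ?thesis by (simp add: distrib_left)
    qed
    show ?thesis unfolding mn using F1 F3 e big by (simp add: algebra_simps)
  next
    case False
    have mn: "min a d = d" using False by simp
    have e: "2 * d - d + 1 = d + 1" by simp
    have F3: "(3 * d + 2) * d \<le> t * d" using ta False by (intro mult_le_mono1) linarith
    show ?thesis unfolding mn e using F1 F3 by (simp add: algebra_simps)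
  qed
  show ?thesis using dm mh C D unfolding u_def by simp
qed

lemma params:
  fixes a d h :: nat
  assumes a2: "2 \<le> a" and d1: "1 \<le> d" and hd: "h = a + d"
  shows "\<exists>m t. d \<le> m \<and> m \<le> h - 1 \<and> h + 1 \<le> t \<and> t \<le> 2 * h \<and> m * (m + 1) \<le> t * d
    \<and> t * (d + (if m = h - 1 then 1 else 0)) \<le> (m + 1) * (m + 2) \<and> a * (m + 1) \<le> t * (m + 1 - d)
    \<and> min a d * (2 * d - min a d + 1) \<le> (m + 1 - d) * ((m + 1 - d) + 2 * d + 1)
    \<and> m * (if m = h - 1 then 1 else 0) \<le> 2 * d"
proof (cases "a * a \<le> h")
  case True
  obtain k where k: "a = k + 1" using a2 by (metis add.commute le_Suc_ex one_le_numeral le_trans Suc_eq_plus1 add_Suc_right)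
  define m where "m = k + d"
  define t where "t = 2 * a + d"
  have mh1: "m = h - 1" unfolding m_def hd k by simp
  have sq: "a * a \<le> a + d" using True hd by simp
  have A: "m * (m + 1) \<le> t * d" unfolding m_def t_def using k sq a2 by (simp add: algebra_simps)
  have B: "t * (d + 1) \<le> (m + 1) * (m + 2)" unfolding m_def t_def using k sq a2 by (simp add: algebra_simps)
  have C: "a * (m + 1) \<le> t * (m + 1 - d)" unfolding m_def t_def using k by (simp add: algebra_simps)
  have u: "m + 1 - d = a" unfolding m_def using k by simp
  have D: "min a d * (2 * d - min a d + 1) \<le> (m + 1 - d) * ((m + 1 - d) + 2 * d + 1)"
    unfolding u by (intro mult_le_mono) auto
  have E: "m \<le> 2 * d"
  proof -
    have "k * k + k \<le> d" using sq k by (simp add: algebra_simps)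
    moreover have "k \<le> k * k + k" by simp
    ultimately show ?thesis unfolding m_def by simp
  qed
  have B': "t * (d + (if m = h - 1 then 1 else 0)) \<le> (m + 1) * (m + 2)" using B mh1 by simp
  have E': "m * (if m = h - 1 then 1 else 0) \<le> 2 * d" using E mh1 by simp
  have r: "d \<le> m" "m \<le> h - 1" "h + 1 \<le> t" "t \<le> 2 * h"
    using mh1 hd a2 unfolding m_def t_def by auto
  show ?thesis using A B' C D E' r by blast
next
  case False
  obtain k where k: "a = k + 1" using a2 by (metis add.commute le_Suc_ex one_le_numeral le_trans Suc_eq_plus1 add_Suc_right)
  define X where "X = (h - 1) * h - 1"
  define t where "t = min (2 * h) (X div d)"
  have big: "a + d < a * a" using False hd by simp
  have kk: "d + 1 \<le> k * k + k" using big k by (simp add: algebra_simps)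
  have X: "X = (k + d) * (k + d + 1) - 1" unfolding X_def hd k by (simp add: algebra_simps)
  have Xpos: "1 \<le> (k + d) * (k + d + 1)" using d1 by simp
  have "(2 * a + d) * d \<le> X"
  proof -
    have "(2 * a + d) * d + 1 \<le> (k + d) * (k + d + 1)" using kk k by (simp add: algebra_simps)
    thus ?thesis unfolding X by simp
  qed
  hence t1: "2 * a + d \<le> X div d" using d1 by (simp add: less_eq_div_iff_mult_less_eq)
  have ta: "2 * a + d \<le> t" unfolding t_def using t1 hd by simp
  have t2: "t \<le> 2 * (a + d)" unfolding t_def hd by simp
  have "t * d \<le> X" unfolding t_def
    by (meson min.cobounded2 div_times_less_eq_dividend le_trans mult_le_mono1)
  hence tl: "t * d < (a + d - 1) * (a + d)" unfolding X hd k using Xpos by (simp add: algebra_simps)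
  obtain m where m: "m * (m + 1) \<le> t * d" "t * d < (m + 1) * (m + 2)" using ex_m by blast
  have cc: "d \<le> m \<and> m + 2 \<le> a + d \<and> a * (m + 1) \<le> t * (m + 1 - d)
     \<and> min a d * (2 * d - min a d + 1) \<le> (m + 1 - d) * ((m + 1 - d) + 2 * d + 1)"
    by (rule case2[OF a2 d1 big ta t2 tl m])
  have "m + 2 \<le> a + d" using cc by blast
  hence mne: "m \<noteq> h - 1" using hd by linarith
  show ?thesis
    by (rule exI[of _ m], rule exI[of _ t]) (use cc mne m ta t2 hd a2 in auto)
qed

lemma total_stake:
  fixes N :: "'a set" and stake :: "'a \<Rightarrow> nat"
  assumes finN: "finite N" and stakes: "\<forall>i\<in>N. stake i = 1 \<or> stake i = a" and a2: "2 \<le> a"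
    and cb: "card {i\<in>N. stake i = a} = n_b" and cs: "card {i\<in>N. stake i = 1} = n_s"
  shows "pool_stake stake N = n_s + a * n_b"
proof -
  define Lg where "Lg = {i\<in>N. stake i = a}"
  define Sm where "Sm = {i\<in>N. stake i = 1}"
  have fLg: "finite Lg" and fSm: "finite Sm" unfolding Lg_def Sm_def using finN by auto
  have NLS: "N = Lg \<union> Sm" unfolding Lg_def Sm_def using stakes by auto
  have LSd: "Lg \<inter> Sm = {}" unfolding Lg_def Sm_def using a2 by auto
  have "pool_stake stake N = (\<Sum>i\<in>Lg. stake i) + (\<Sum>i\<in>Sm. stake i)"
    unfolding pool_stake_def NLS by (rule sum.union_disjoint[OF fLg fSm LSd])
  also have "(\<Sum>i\<in>Lg. stake i) = (\<Sum>i\<in>Lg. a)" unfolding Lg_def by simp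
  also have "(\<Sum>i\<in>Sm. stake i) = (\<Sum>i\<in>Sm. 1)" unfolding Sm_def by simp
  finally show ?thesis using cb cs unfolding Lg_def Sm_def by simp
qed

lemma card_part_bound:
  fixes N :: "'a set" and stake :: "'a \<Rightarrow> nat"
  assumes finN: "finite N" and part: "partition_on N P" and win: "\<forall>S\<in>P. winning stake h S"
  shows "card P * h \<le> pool_stake stake N"
proof -
  have fin: "\<forall>A\<in>P. finite A" using part finN unfolding partition_on_def by (metis Union_upper finite_subset)
  have dis: "\<forall>A\<in>P. \<forall>B\<in>P. A \<noteq> B \<longrightarrow> A \<inter> B = {}"
    using part unfolding partition_on_def pairwise_def disjnt_def by blast
  have U: "\<Union>P = N" using part unfolding partition_on_def by blast
  have "card P * h = (\<Sum>S\<in>P. h)" by simp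
  also have "\<dots> \<le> (\<Sum>S\<in>P. pool_stake stake S)"
    by (rule sum_mono) (use win in \<open>auto simp: winning_def\<close>)
  also have "\<dots> = pool_stake stake N"
    unfolding pool_stake_def U[symmetric] using sum.Union_disjoint[OF fin dis, of stake] by simp
  finally show ?thesis .
qed

lemma opt_le:
  fixes N :: "'a set" and stake :: "'a \<Rightarrow> nat"
  assumes finN: "finite N" and h1: "1 \<le> h" and part: "partition_on N P0" and win: "\<forall>S\<in>P0. winning stake h S"
  shows "OPT N stake h * h \<le> pool_stake stake N"
proof -
  define Q where "Q = {card P | P. partition_on N P \<and> (\<forall>S\<in>P. winning stake h S)}"
  have bnd: "\<forall>k\<in>Q. k * h \<le> pool_stake stake N" unfolding Q_def using card_part_bound[OF finN] by blast
  have "Q \<subseteq> {..pool_stake stake N}"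
  proof
    fix k assume "k \<in> Q"
    hence "k * h \<le> pool_stake stake N" using bnd by blast
    moreover have "k * 1 \<le> k * h" using h1 by (rule mult_le_mono2)
    ultimately have "k \<le> pool_stake stake N" by linarith
    thus "k \<in> {..pool_stake stake N}" by simp
  qed
  hence fQ: "finite Q" by (rule finite_subset) simp
  have ne: "Q \<noteq> {}" unfolding Q_def using part win by blast
  have "OPT N stake h \<in> Q" unfolding OPT_def Q_def[symmetric] using fQ ne by (rule Max_in)
  thus ?thesis using bnd by blast
qed

theorem theorem3p6:
  fixes N :: "'a set" and stake :: "'a \<Rightarrow> nat" and h a n_b n_s :: nat
  assumes "finite N"
    and "2 \<le> a" and "a \<le> h - 1"
    and "\<forall>i\<in>N. stake i = 1 \<or> stake i = a"
    and "card {i\<in>N. stake i = a} = n_b"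
    and "card {i\<in>N. stake i = 1} = n_s"
    and "n_s \<ge> (2 * h - 1)^2 + n_b * (h + 1)"
  shows "\<exists>P. nash_eq N stake h P \<and> num_winning stake h P > 0 \<and>
             real (OPT N stake h) / real (num_winning stake h P) \<le> 2"
proof -
  note finN = assms(1) and a2 = assms(2) and ah = assms(3) and stakes = assms(4)
    and cb = assms(5) and cs = assms(6) and big = assms(7)
  define d where "d = h - a"
  have hd: "h = a + d" and d1: "1 \<le> d" unfolding d_def using a2 ah by auto
  obtain m t where mt: "d \<le> m" "m \<le> h - 1" "h + 1 \<le> t" "t \<le> 2 * h" "m * (m + 1) \<le> t * d"
    "t * (d + (if m = h - 1 then 1 else 0)) \<le> (m + 1) * (m + 2)" "a * (m + 1) \<le> t * (m + 1 - d)"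
    "min a d * (2 * d - min a d + 1) \<le> (m + 1 - d) * ((m + 1 - d) + 2 * d + 1)"
    "m * (if m = h - 1 then 1 else 0) \<le> 2 * d"
    using params[OF a2 d1 hd] by blast
  have t2: "2 \<le> t" using mt(3) hd a2 by linarith
  have big': "n_b * m + (t - 1)^2 \<le> n_s"
  proof -
    have "(t - 1)^2 \<le> (2 * h - 1)^2" using mt(4) by (intro power_mono) auto
    moreover have "n_b * m \<le> n_b * (h + 1)" using mt(2) by (intro mult_le_mono2) simp
    ultimately show ?thesis using big by linarith
  qed
  obtain P q where P: "partition_on N P" "\<forall>S\<in>P. Lpool stake a m S \<or> Ppool stake t S" "card P = n_b + q"
      "n_s \<le> n_b * m + t * q" "0 < q"
    using construct[OF finN stakes a2 cb cs t2 big'] by blast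
  have ne: "nash_eq N stake h P"
    by (rule nash[OF hd d1 a2 finN stakes P(1) P(2) mt(1) mt(2) mt(3) mt(5) mt(6) mt(7) mt(8) mt(9)])
  have win: "\<forall>S\<in>P. winning stake h S" using ne unfolding nash_eq_def by blast
  have nw: "num_winning stake h P = card P" unfolding num_winning_def using win
    by (metis (no_types, lifting) Collect_mem_eq Collect_cong)
  have opt: "OPT N stake h * h \<le> n_s + a * n_b"
    using opt_le[OF finN _ P(1) win] total_stake[OF finN stakes a2 cb cs] hd a2 by simp
  have "n_s + a * n_b \<le> (n_b + q) * (2 * h)"
  proof -
    have "n_b * m + a * n_b \<le> n_b * (2 * h)"
    proof -
      have "m + a \<le> 2 * h" using mt(2) ah by linarith
      hence "n_b * (m + a) \<le> n_b * (2 * h)" by (rule mult_le_mono2)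
      thus ?thesis by (simp add: algebra_simps)
    qed
    moreover have "t * q \<le> 2 * h * q" using mt(4) by (rule mult_le_mono1)
    moreover have "(n_b + q) * (2 * h) = n_b * (2 * h) + 2 * h * q" by (simp add: algebra_simps)
    ultimately show ?thesis using P(4) by linarith
  qed
  hence "OPT N stake h * h \<le> (2 * (n_b + q)) * h" using opt by (simp add: algebra_simps)
  hence o2: "OPT N stake h \<le> 2 * (n_b + q)" using hd a2 by simp
  have cpos: "0 < card P" using P(3,5) by simp
  have "real (OPT N stake h) / real (num_winning stake h P) \<le> 2"
    unfolding nw using o2 cpos P(3) by (simp add: divide_le_eq)
  thus ?thesis using ne nw cpos by auto
qed


end
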